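(* Let $F$ be a safe sentence and let $\mathbf c$ be a nonempty finite set of object constants containing every object constant occurring in $F$. Then $\mathrm{SM}[\mathrm{Ground}_{\mathbf c}[F]]$ is equivalent to $\mathrm{SM}[F]$ (they are satisfied by the same interpretations).
   Context: Formulas are first-order formulas over a signature with object constants, predicate constants and equality, but no function constants of arity $>0$. Primitive connectives are $\bot,\land,\lor,\rightarrow$, quantifiers $\forall,\exists$; $\neg G$ is $G\rightarrow\bot$, $\top$ is $\bot\rightarrow\bot$, $G\leftrightarrow H$ is $(G\rightarrow H)\land(H\rightarrow G)$. A sentence is a formula without free variables. Stable model operator: for a sentence $F$, let $\mathbf p=p_1,\dots,p_n$ be all predicate constants occurring in $F$ and $\mathbf u=u_1,\dots,u_n$ distinct predicate variables with matching arities. $\mathbf u\le\mathbf p$ is $\bigwedge_i\forall\mathbf x(u_i(\mathbf x)\rightarrow p_i(\mathbf x))$, $\mathbf u=\mathbf p$ is $\bigwedge_i\forall\mathbf x(u_i(\mathbf x)\leftrightarrow p_i(\mathbf x))$, $\mathbf u<\mathbf p$ is $(\mathbf u\le\mathbf p)\land\neg(\mathbf u=\mathbf p)$. $F^*(\mathbf u)$: $p_i(\mathbf t)^*=u_i(\mathbf t)$; $(t_1=t_2)^*=(t_1=t_2)$; $\bot^*=\bot$; $(G\land H)^*=G^*\land H^*$; $(G\lor H)^*=G^*\lor H^*$; $(G\rightarrow H)^*=(G^*\rightarrow H^* )\land(G\rightarrow H)$; $(\forall xG)^*=\forall xG^*$; $(\exists xG)^*=\exists xG^*$. $\mathrm{SM}[F]$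 is $F\land\neg\exists\mathbf u((\mathbf u<\mathbf p)\land F^*(\mathbf u))$. Restricted variables: for quantifier-free $G$, $\mathrm{RV}(G)$ is: $\emptyset$ if $G$ is an equality between two variables; the set of variables of $G$ if $G$ is any other atomic formula; $\mathrm{RV}(\bot)=\emptyset$; $\mathrm{RV}(G\land H)=\mathrm{RV}(G)\cup\mathrm{RV}(H)$; $\mathrm{RV}(G\lor H)=\mathrm{RV}(G)\cap\mathrm{RV}(H)$; $\mathrm{RV}(G\rightarrow H)=\emptyset$. An occurrence of a subformula or variable is positive if the number of implications containing it in their antecedent is even, negative otherwise, and strictly positive if it is in the antecedent of no implication. A prenex sentence $Q_1x_1\cdots Q_nx_nM$ ($M$ quantifier-free, $x_i$ distinct) is semi-safe if every strictly positive occurrence of every $x_i$ in $M$ belongs to a subformula $G\rightarrow H$ with $x_i\in\mathrm{RV}(G)$. Simplification transformations: $\neg\bot\mapsto\top$, $\neg\top\mapsto\bot$; $\bot\land G\mapsto\bot$, $G\land\bot\mapsto\bot$, $\top\land G\mapsto G$, $G\land\top\mapsto G$; $\bot\lor G\mapsto G$, $G\lor\bot\mapsto G$, $\top\lor G\mapsto\top$, $G\lor\top\mapsto\top$; $\bot\rightarrow G\mapsto\top$, $G\rightarrow\top\mapsto\top$, $\top\rightarrow G\mapsto G$. A variable $x$ is positively (resp. negatively) weakly restricted in a quantifier-free formula $G$ if the formula obtained from $G$ by first replacing every atomic formula $A$ of $G$ with $x\in\mathrm{RV}(A)$ by $\bot$ and then applying the simplification transformations is $\top$ (resp. $\bot$).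 A semi-safe prenex sentence $Q_1x_1\cdots Q_nx_nM$ is safe if for every occurrence of every variable $x_i$: (a) if $Q_i=\forall$, the occurrence belongs to a positive subformula (of the sentence) in which $x_i$ is positively weakly restricted, or to a negative subformula in which $x_i$ is negatively weakly restricted; (b) if $Q_i=\exists$, the occurrence belongs to a negative subformula in which $x_i$ is positively weakly restricted, or to a positive subformula in which $x_i$ is negatively weakly restricted. Grounding: for a prenex sentence $F$ and nonempty finite set $\mathbf c$ of object constants, $\mathrm{Ground}_{\mathbf c}[F]$ is $F$ if $F$ is quantifier-free; $\mathrm{Ground}_{\mathbf c}[\forall xG(x)]=\bigwedge_{c\in\mathbf c}\mathrm{Ground}_{\mathbf c}[G(c)]$; $\mathrm{Ground}_{\mathbf c}[\exists xG(x)]=\bigvee_{c\in\mathbf c}\mathrm{Ground}_{\mathbf c}[G(c)]$. *)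

theory Defs
  imports Main
begin

text \<open>A predicate constant is identified by its name together with its arity,
  i.e. the atom Atom p ts uses the predicate constant (p, length ts).\<close>

datatype ('v, 'c) trm = Var 'v | Cst 'c

datatype ('p, 'v, 'c) fm =
    Bot
  | Atom 'p "('v, 'c) trm list"
  | Eq "('v, 'c) trm" "('v, 'c) trm"
  | And "('p, 'v, 'c) fm" "('p, 'v, 'c) fm"
  | Or "('p, 'v, 'c) fm" "('p, 'v, 'c) fm"
  | Imp "('p, 'v, 'c) fm" "('p, 'v, 'c) fm"
  | All 'v "('p, 'v, 'c) fm"
  | Ex 'v "('p, 'v, 'c) fm"

abbreviation Top :: "('p, 'v, 'c) fm" where "Top \<equiv> Imp Bot Bot"
abbreviation Neg :: "('p, 'v, 'c) fm \<Rightarrow> ('p, 'v, 'c) fm" where "Neg G \<equiv> Imp G Bot"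

fun tvars :: "('v, 'c) trm \<Rightarrow> 'v set" where
  "tvars (Var x) = {x}"
| "tvars (Cst c) = {}"

fun tconsts :: "('v, 'c) trm \<Rightarrow> 'c set" where
  "tconsts (Var x) = {}"
| "tconsts (Cst c) = {c}"

fun fv :: "('p, 'v, 'c) fm \<Rightarrow> 'v set" where
  "fv Bot = {}"
| "fv (Atom p ts) = (\<Union>t\<in>set ts. tvars t)"
| "fv (Eq t1 t2) = tvars t1 \<union> tvars t2"
| "fv (And G H) = fv G \<union> fv H"
| "fv (Or G H) = fv G \<union> fv H"
| "fv (Imp G H) = fv G \<union> fv H"
| "fv (All x G) = fv G - {x}"
| "fv (Ex x G) = fv G - {x}"

definition sentence :: "('p, 'v, 'c) fm \<Rightarrow> bool" where
  "sentence F \<longleftrightarrow> fv F = {}"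

fun consts_fm :: "('p, 'v, 'c) fm \<Rightarrow> 'c set" where
  "consts_fm Bot = {}"
| "consts_fm (Atom p ts) = (\<Union>t\<in>set ts. tconsts t)"
| "consts_fm (Eq t1 t2) = tconsts t1 \<union> tconsts t2"
| "consts_fm (And G H) = consts_fm G \<union> consts_fm H"
| "consts_fm (Or G H) = consts_fm G \<union> consts_fm H"
| "consts_fm (Imp G H) = consts_fm G \<union> consts_fm H"
| "consts_fm (All x G) = consts_fm G"
| "consts_fm (Ex x G) = consts_fm G"

fun preds :: "('p, 'v, 'c) fm \<Rightarrow> ('p \<times> nat) set" where
  "preds Bot = {}"
| "preds (Atom p ts) = {(p, length ts)}"
| "preds (Eq t1 t2) = {}"
| "preds (And G H) = preds G \<union> preds H"
| "preds (Or G H) = preds G \<union> preds H"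
| "preds (Imp G H) = preds G \<union> preds H"
| "preds (All x G) = preds G"
| "preds (Ex x G) = preds G"

fun qfree :: "('p, 'v, 'c) fm \<Rightarrow> bool" where
  "qfree (And G H) = (qfree G \<and> qfree H)"
| "qfree (Or G H) = (qfree G \<and> qfree H)"
| "qfree (Imp G H) = (qfree G \<and> qfree H)"
| "qfree (All x G) = False"
| "qfree (Ex x G) = False"
| "qfree _ = True"

text \<open>An interpretation over a (nonempty) universe 'd consists of an interpretation
  of object constants C and of predicate constants P (P p ds for length ds = n is
  the extent of the predicate constant (p, n)); equality is identity.\<close>

fun tval :: "('c \<Rightarrow> 'd) \<Rightarrow> ('v \<Rightarrow> 'd) \<Rightarrow> ('v, 'c) trm \<Rightarrow> 'd" where
  "tval C e (Var x) = e x"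
| "tval C e (Cst c) = C c"

fun eval :: "('c \<Rightarrow> 'd) \<Rightarrow> ('p \<Rightarrow> 'd list \<Rightarrow> bool) \<Rightarrow> ('v \<Rightarrow> 'd)
              \<Rightarrow> ('p, 'v, 'c) fm \<Rightarrow> bool" where
  "eval C P e Bot = False"
| "eval C P e (Atom p ts) = P p (map (tval C e) ts)"
| "eval C P e (Eq t1 t2) = (tval C e t1 = tval C e t2)"
| "eval C P e (And G H) = (eval C P e G \<and> eval C P e H)"
| "eval C P e (Or G H) = (eval C P e G \<or> eval C P e H)"
| "eval C P e (Imp G H) = (eval C P e G \<longrightarrow> eval C P e H)"
| "eval C P e (All x G) = (\<forall>d. eval C P (e(x := d)) G)"
| "eval C P e (Ex x G) = (\<exists>d. eval C P (e(x := d)) G)"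

definition sat :: "('c \<Rightarrow> 'd) \<Rightarrow> ('p \<Rightarrow> 'd list \<Rightarrow> bool) \<Rightarrow> ('p, 'v, 'c) fm \<Rightarrow> bool" where
  "sat C P F \<longleftrightarrow> (\<forall>e. eval C P e F)"

fun rename_preds :: "('p \<Rightarrow> 'q) \<Rightarrow> ('p, 'v, 'c) fm \<Rightarrow> ('q, 'v, 'c) fm" where
  "rename_preds f Bot = Bot"
| "rename_preds f (Atom p ts) = Atom (f p) ts"
| "rename_preds f (Eq t1 t2) = Eq t1 t2"
| "rename_preds f (And G H) = And (rename_preds f G) (rename_preds f H)"
| "rename_preds f (Or G H) = Or (rename_preds f G) (rename_preds f H)"
| "rename_preds f (Imp G H) = Imp (rename_preds f G) (rename_preds f H)"
| "rename_preds f (All x G) = All x (rename_preds f G)"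
| "rename_preds f (Ex x G) = Ex x (rename_preds f G)"

text \<open>F*(u): predicate constants p are represented by Inl p, the predicate
  variables u by Inr p (same arity).\<close>
fun star :: "('p, 'v, 'c) fm \<Rightarrow> ('p + 'p, 'v, 'c) fm" where
  "star Bot = Bot"
| "star (Atom p ts) = Atom (Inr p) ts"
| "star (Eq t1 t2) = Eq t1 t2"
| "star (And G H) = And (star G) (star H)"
| "star (Or G H) = Or (star G) (star H)"
| "star (Imp G H) = And (Imp (star G) (star H)) (rename_preds Inl (Imp G H))"
| "star (All x G) = All x (star G)"
| "star (Ex x G) = Ex x (star G)"

definition le_on :: "('p \<times> nat) set \<Rightarrow> ('p \<Rightarrow> 'd list \<Rightarrow> bool) \<Rightarrow> ('p \<Rightarrow> 'd list \<Rightarrow> bool) \<Rightarrow> bool" where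
  "le_on Ps U P \<longleftrightarrow> (\<forall>(p, n) \<in> Ps. \<forall>ds. length ds = n \<longrightarrow> U p ds \<longrightarrow> P p ds)"

definition eq_on :: "('p \<times> nat) set \<Rightarrow> ('p \<Rightarrow> 'd list \<Rightarrow> bool) \<Rightarrow> ('p \<Rightarrow> 'd list \<Rightarrow> bool) \<Rightarrow> bool" where
  "eq_on Ps U P \<longleftrightarrow> (\<forall>(p, n) \<in> Ps. \<forall>ds. length ds = n \<longrightarrow> (U p ds \<longleftrightarrow> P p ds))"

definition lt_on :: "('p \<times> nat) set \<Rightarrow> ('p \<Rightarrow> 'd list \<Rightarrow> bool) \<Rightarrow> ('p \<Rightarrow> 'd list \<Rightarrow> bool) \<Rightarrow> bool" where
  "lt_on Ps U P \<longleftrightarrow> le_on Ps U P \<and> \<not> eq_on Ps U P"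

definition SM :: "('c \<Rightarrow> 'd) \<Rightarrow> ('p \<Rightarrow> 'd list \<Rightarrow> bool) \<Rightarrow> ('p, 'v, 'c) fm \<Rightarrow> bool" where
  "SM C P F \<longleftrightarrow> sat C P F \<and>
     \<not> (\<exists>U. lt_on (preds F) U P \<and> sat C (case_sum P U) (star F))"

fun rv :: "('p, 'v, 'c) fm \<Rightarrow> 'v set" where
  "rv Bot = {}"
| "rv (Atom p ts) = (\<Union>t\<in>set ts. tvars t)"
| "rv (Eq t1 t2) = (case (t1, t2) of (Var _, Var _) \<Rightarrow> {} | _ \<Rightarrow> tvars t1 \<union> tvars t2)"
| "rv (And G H) = rv G \<union> rv H"
| "rv (Or G H) = rv G \<inter> rv H"
| "rv (Imp G H) = {}"
| "rv (All x G) = {}"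
| "rv (Ex x G) = {}"

datatype quant = QAll | QEx

fun prefix :: "('p, 'v, 'c) fm \<Rightarrow> (quant \<times> 'v) list" where
  "prefix (All x G) = (QAll, x) # prefix G"
| "prefix (Ex x G) = (QEx, x) # prefix G"
| "prefix _ = []"

fun matrix :: "('p, 'v, 'c) fm \<Rightarrow> ('p, 'v, 'c) fm" where
  "matrix (All x G) = matrix G"
| "matrix (Ex x G) = matrix G"
| "matrix G = G"

definition prenex_sentence :: "('p, 'v, 'c) fm \<Rightarrow> bool" where
  "prenex_sentence F \<longleftrightarrow> sentence F \<and> qfree (matrix F) \<and> distinct (map snd (prefix F))"

text \<open>Variables having a strictly positive occurrence in the (quantifier-free) formula
  that does not belong to any subformula G \<longrightarrow> H with the variable in RV(G).\<close>
fun sp_unrestricted :: "('p, 'v, 'c) fm \<Rightarrow> 'v set" where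
  "sp_unrestricted Bot = {}"
| "sp_unrestricted (Atom p ts) = (\<Union>t\<in>set ts. tvars t)"
| "sp_unrestricted (Eq t1 t2) = tvars t1 \<union> tvars t2"
| "sp_unrestricted (And G H) = sp_unrestricted G \<union> sp_unrestricted H"
| "sp_unrestricted (Or G H) = sp_unrestricted G \<union> sp_unrestricted H"
| "sp_unrestricted (Imp G H) = sp_unrestricted H - rv G"
| "sp_unrestricted (All x G) = sp_unrestricted G"
| "sp_unrestricted (Ex x G) = sp_unrestricted G"

definition semi_safe :: "('p, 'v, 'c) fm \<Rightarrow> bool" where
  "semi_safe F \<longleftrightarrow> prenex_sentence F \<and>
     (\<forall>x \<in> set (map snd (prefix F)). x \<notin> sp_unrestricted (matrix F))"

fun repl_bot :: "'v \<Rightarrow> ('p, 'v, 'c) fm \<Rightarrow> ('p, 'v, 'c) fm" where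
  "repl_bot x Bot = Bot"
| "repl_bot x (Atom p ts) = (if x \<in> rv (Atom p ts) then Bot else Atom p ts)"
| "repl_bot x (Eq t1 t2) = (if x \<in> rv (Eq t1 t2 :: ('p, 'v, 'c) fm) then Bot else Eq t1 t2)"
| "repl_bot x (And G H) = And (repl_bot x G) (repl_bot x H)"
| "repl_bot x (Or G H) = Or (repl_bot x G) (repl_bot x H)"
| "repl_bot x (Imp G H) = Imp (repl_bot x G) (repl_bot x H)"
| "repl_bot x (All y G) = All y (repl_bot x G)"
| "repl_bot x (Ex y G) = Ex y (repl_bot x G)"

text \<open>Exhaustive application of the simplification transformations (bottom-up;
  the rewriting system is terminating and confluent, so this computes its result).\<close>
definition simp_and :: "('p, 'v, 'c) fm \<Rightarrow> ('p, 'v, 'c) fm \<Rightarrow> ('p, 'v, 'c) fm" where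
  "simp_and G H = (if G = Bot \<or> H = Bot then Bot
                   else if G = Top then H else if H = Top then G else And G H)"

definition simp_or :: "('p, 'v, 'c) fm \<Rightarrow> ('p, 'v, 'c) fm \<Rightarrow> ('p, 'v, 'c) fm" where
  "simp_or G H = (if G = Top \<or> H = Top then Top
                  else if G = Bot then H else if H = Bot then G else Or G H)"

definition simp_imp :: "('p, 'v, 'c) fm \<Rightarrow> ('p, 'v, 'c) fm \<Rightarrow> ('p, 'v, 'c) fm" where
  "simp_imp G H = (if G = Bot \<or> H = Top then Top
                   else if G = Top then H else Imp G H)"

fun simplify :: "('p, 'v, 'c) fm \<Rightarrow> ('p, 'v, 'c) fm" where
  "simplify (And G H) = simp_and (simplify G) (simplify H)"
| "simplify (Or G H) = simp_or (simplify G) (simplify H)"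
| "simplify (Imp G H) = simp_imp (simplify G) (simplify H)"
| "simplify (All x G) = All x (simplify G)"
| "simplify (Ex x G) = Ex x (simplify G)"
| "simplify G = G"

definition pos_weakly_restricted :: "'v \<Rightarrow> ('p, 'v, 'c) fm \<Rightarrow> bool" where
  "pos_weakly_restricted x G \<longleftrightarrow> qfree G \<and> simplify (repl_bot x G) = Top"

definition neg_weakly_restricted :: "'v \<Rightarrow> ('p, 'v, 'c) fm \<Rightarrow> bool" where
  "neg_weakly_restricted x G \<longleftrightarrow> qfree G \<and> simplify (repl_bot x G) = Bot"

text \<open>Condition (a)/(b) for a subformula S occurring with polarity pol
  (True = positive) and a variable x bound by quantifier q.\<close>
definition good_sub :: "quant \<Rightarrow> 'v \<Rightarrow> bool \<Rightarrow> ('p, 'v, 'c) fm \<Rightarrow> bool" where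
  "good_sub q x pol S \<longleftrightarrow>
     (if (q = QAll) = pol then pos_weakly_restricted x S else neg_weakly_restricted x S)"

text \<open>Every occurrence of x in S (which occurs with polarity pol) belongs to a
  subformula of S that is good in the above sense.\<close>
fun all_occ_covered :: "quant \<Rightarrow> 'v \<Rightarrow> bool \<Rightarrow> ('p, 'v, 'c) fm \<Rightarrow> bool" where
  "all_occ_covered q x pol S \<longleftrightarrow> good_sub q x pol S \<or>
     (case S of
        Bot \<Rightarrow> True
      | Atom p ts \<Rightarrow> x \<notin> (\<Union>t\<in>set ts. tvars t)
      | Eq t1 t2 \<Rightarrow> x \<notin> tvars t1 \<union> tvars t2
      | And G H \<Rightarrow> all_occ_covered q x pol G \<and> all_occ_covered q x pol H
      | Or G H \<Rightarrow> all_occ_covered q x pol G \<and> all_occ_covered q x pol H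
      | Imp G H \<Rightarrow> all_occ_covered q x (\<not> pol) G \<and> all_occ_covered q x pol H
      | All y G \<Rightarrow> False
      | Ex y G \<Rightarrow> False)"

definition safe :: "('p, 'v, 'c) fm \<Rightarrow> bool" where
  "safe F \<longleftrightarrow> semi_safe F \<and>
     (\<forall>(q, x) \<in> set (prefix F). all_occ_covered q x True (matrix F))"

fun subst_t :: "'v \<Rightarrow> 'c \<Rightarrow> ('v, 'c) trm \<Rightarrow> ('v, 'c) trm" where
  "subst_t x c (Var y) = (if y = x then Cst c else Var y)"
| "subst_t x c (Cst d) = Cst d"

fun subst :: "'v \<Rightarrow> 'c \<Rightarrow> ('p, 'v, 'c) fm \<Rightarrow> ('p, 'v, 'c) fm" where
  "subst x c Bot = Bot"
| "subst x c (Atom p ts) = Atom p (map (subst_t x c) ts)"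
| "subst x c (Eq t1 t2) = Eq (subst_t x c t1) (subst_t x c t2)"
| "subst x c (And G H) = And (subst x c G) (subst x c H)"
| "subst x c (Or G H) = Or (subst x c G) (subst x c H)"
| "subst x c (Imp G H) = Imp (subst x c G) (subst x c H)"
| "subst x c (All y G) = All y (if y = x then G else subst x c G)"
| "subst x c (Ex y G) = Ex y (if y = x then G else subst x c G)"

fun fsize :: "('p, 'v, 'c) fm \<Rightarrow> nat" where
  "fsize (And G H) = Suc (fsize G + fsize H)"
| "fsize (Or G H) = Suc (fsize G + fsize H)"
| "fsize (Imp G H) = Suc (fsize G + fsize H)"
| "fsize (All x G) = Suc (fsize G)"
| "fsize (Ex x G) = Suc (fsize G)"
| "fsize _ = 1"

lemma fsize_subst [simp]: "fsize (subst x c G) = fsize G"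
  by (induction G) auto

fun bigAnd :: "('p, 'v, 'c) fm list \<Rightarrow> ('p, 'v, 'c) fm" where
  "bigAnd [] = Top"
| "bigAnd [G] = G"
| "bigAnd (G # Gs) = And G (bigAnd Gs)"

fun bigOr :: "('p, 'v, 'c) fm list \<Rightarrow> ('p, 'v, 'c) fm" where
  "bigOr [] = Bot"
| "bigOr [G] = G"
| "bigOr (G # Gs) = Or G (bigOr Gs)"

text \<open>Ground_c[F] where the finite nonempty set c is given by a list enumerating it\<close>
function ground :: "'c list \<Rightarrow> ('p, 'v, 'c) fm \<Rightarrow> ('p, 'v, 'c) fm" where
  "ground cs (All x G) = bigAnd (map (\<lambda>c. ground cs (subst x c G)) cs)"
| "ground cs (Ex x G) = bigOr (map (\<lambda>c. ground cs (subst x c G)) cs)"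
| "ground cs Bot = Bot"
| "ground cs (Atom p ts) = Atom p ts"
| "ground cs (Eq t1 t2) = Eq t1 t2"
| "ground cs (And G H) = And G H"
| "ground cs (Or G H) = Or G H"
| "ground cs (Imp G H) = Imp G H"
  by pat_completeness auto
termination
  by (relation "measure (\<lambda>(cs, F). fsize F)") auto

end

theory Submission
  imports Defs
begin


declare all_occ_covered.simps[simp del]

lemma eval_rename_Inl: "eval C (case_sum P U) e (rename_preds Inl G) = eval C P e G"
  by (induction G arbitrary: e) auto

lemma tval_subst: "tval C e (subst_t x c t) = tval C (e(x := C c)) t"
  by (cases t) auto

lemma eval_subst: "eval C P e (subst x c G) = eval C P (e(x := C c)) G"
  by (induction G arbitrary: e) (auto simp: tval_subst o_def fun_upd_twist)

fun qeval :: "'d set \<Rightarrow> (quant \<times> 'v) list \<Rightarrow> (('v \<Rightarrow> 'd) \<Rightarrow> bool) \<Rightarrow> ('v \<Rightarrow> 'd) \<Rightarrow> bool" where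
  "qeval D [] \<Phi> e = \<Phi> e"
| "qeval D ((QAll, x) # qs) \<Phi> e = (\<forall>d\<in>D. qeval D qs \<Phi> (e(x := d)))"
| "qeval D ((QEx, x) # qs) \<Phi> e = (\<exists>d\<in>D. qeval D qs \<Phi> (e(x := d)))"

lemma L1: "eval C P e F = qeval UNIV (prefix F) (\<lambda>e. eval C P e (matrix F)) e"
  by (induction F arbitrary: e) auto

lemma prefix_subst: "prefix (subst x c G) = prefix G"
  by (induction G) auto

lemma qeval_subst: "qeval D (prefix (subst x c G)) (\<lambda>e. eval C P e (matrix (subst x c G))) e
   = qeval D (prefix G) (\<lambda>e. eval C P e (matrix G)) (e(x := C c))"
proof (induction G arbitrary: e)
  case (All y G)
  show ?case
  proof (cases "y = x")
    case True
    have "\<And>d. e(x := C c, x := d) = e(x := d)" by simp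
    then show ?thesis using True by (simp only: subst.simps prefix.simps matrix.simps qeval.simps if_True simp_thms)
  next
    case False
    have "\<And>d. e(y := d, x := C c) = e(x := C c, y := d)" using False by (rule fun_upd_twist)
    then show ?thesis using False by (simp only: subst.simps prefix.simps matrix.simps qeval.simps if_False All.IH simp_thms)
  qed
next
  case (Ex y G)
  show ?case
  proof (cases "y = x")
    case True
    have "\<And>d. e(x := C c, x := d) = e(x := d)" by simp
    then show ?thesis using True by (simp only: subst.simps prefix.simps matrix.simps qeval.simps if_True simp_thms)
  next
    case False
    have "\<And>d. e(y := d, x := C c) = e(x := C c, y := d)" using False by (rule fun_upd_twist)
    then show ?thesis using False by (simp only: subst.simps prefix.simps matrix.simps qeval.simps if_False Ex.IH simp_thms)
  qed
qed (simp_all add: eval_subst[symmetric] del: eval.simps)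

lemma eval_bigAnd: "Gs \<noteq> [] \<Longrightarrow> eval C P e (bigAnd Gs) = (\<forall>G\<in>set Gs. eval C P e G)"
  by (induction Gs rule: bigAnd.induct) auto

lemma eval_bigOr: "Gs \<noteq> [] \<Longrightarrow> eval C P e (bigOr Gs) = (\<exists>G\<in>set Gs. eval C P e G)"
  by (induction Gs rule: bigOr.induct) auto

lemma L3: "cs \<noteq> [] \<Longrightarrow> eval C P e (ground cs F) = qeval (C ` set cs) (prefix F) (\<lambda>e. eval C P e (matrix F)) e"
proof (induction cs F arbitrary: e rule: ground.induct)
  case (1 cs x G)
  then show ?case by (simp add: eval_bigAnd qeval_subst)
next
  case (2 cs x G)
  then show ?case by (simp add: eval_bigOr qeval_subst)
qed auto

lemma rename_subst: "rename_preds f (subst x c G) = subst x c (rename_preds f G)"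
  by (induction G) auto

lemma star_subst: "star (subst x c G) = subst x c (star G)"
  by (induction G) (auto simp: rename_subst)

lemma star_bigAnd: "Gs \<noteq> [] \<Longrightarrow> star (bigAnd Gs) = bigAnd (map star Gs)"
  by (induction Gs rule: bigAnd.induct) auto

lemma star_bigOr: "Gs \<noteq> [] \<Longrightarrow> star (bigOr Gs) = bigOr (map star Gs)"
  by (induction Gs rule: bigOr.induct) auto

lemma star_ground: "cs \<noteq> [] \<Longrightarrow> star (ground cs F) = ground cs (star F)"
proof (induction cs F rule: ground.induct)
  case (1 cs x G)
  then show ?case by (simp add: star_bigAnd star_subst o_def cong: list.map_cong)
next
  case (2 cs x G)
  then show ?case by (simp add: star_bigOr star_subst o_def cong: list.map_cong)
qed auto

lemma prefix_star: "prefix (star F) = prefix F"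
  by (induction F) auto

lemma matrix_star: "matrix (star F) = star (matrix F)"
  by (induction F) auto

lemma preds_subst: "preds (subst x c G) = preds G"
  by (induction G) auto

lemma preds_bigAnd: "Gs \<noteq> [] \<Longrightarrow> preds (bigAnd Gs) = (\<Union>G\<in>set Gs. preds G)"
  by (induction Gs rule: bigAnd.induct) auto

lemma preds_bigOr: "Gs \<noteq> [] \<Longrightarrow> preds (bigOr Gs) = (\<Union>G\<in>set Gs. preds G)"
  by (induction Gs rule: bigOr.induct) auto

lemma preds_ground: "cs \<noteq> [] \<Longrightarrow> preds (ground cs F) = preds F"
proof (induction cs F rule: ground.induct)
  case (1 cs x G)
  then show ?case by (simp add: preds_bigAnd preds_subst)
next
  case (2 cs x G)
  then show ?case by (simp add: preds_bigOr preds_subst)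
qed auto

lemma preds_matrix: "preds (matrix F) = preds F"
  by (induction F) auto

lemma consts_matrix: "consts_fm (matrix F) = consts_fm F"
  by (induction F) auto

lemma fv_matrix: "fv (matrix F) \<subseteq> fv F \<union> set (map snd (prefix F))"
  by (induction F) auto

lemma sp_fv: "qfree G \<Longrightarrow> sp_unrestricted G \<subseteq> fv G"
  by (induction G) auto

lemma star_mono: "(\<And>p ds. U p ds \<Longrightarrow> P p ds) \<Longrightarrow> eval C (case_sum P U) e (star G) \<Longrightarrow> eval C P e G"
  by (induction G arbitrary: e) (auto simp: eval_rename_Inl)

lemma rv_star: "C ` consts_fm G \<subseteq> D \<Longrightarrow> eval C (case_sum P (\<lambda>p ds. P p ds \<and> set ds \<subseteq> D)) e (star G)
   \<Longrightarrow> x \<in> rv G \<Longrightarrow> e x \<in> D"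
proof (induction G)
  case (Atom p ts)
  then obtain t where "t \<in> set ts" and xt: "x \<in> tvars t" by auto
  have "t = Var x" by (cases t) (use xt in auto)
  with Atom \<open>t \<in> set ts\<close> show ?case by force
next
  case (Eq t1 t2)
  then show ?case by (cases t1; cases t2) auto
qed auto

lemma semi: "qfree G \<Longrightarrow> C ` consts_fm G \<subseteq> D \<Longrightarrow> \<forall>x\<in>sp_unrestricted G. e x \<in> D \<Longrightarrow> eval C P e G
   \<Longrightarrow> eval C (case_sum P (\<lambda>p ds. P p ds \<and> set ds \<subseteq> D)) e (star G)"
proof (induction G)
  case (Atom p ts)
  have "\<forall>t\<in>set ts. tval C e t \<in> D"
  proof
    fix t assume tin: "t \<in> set ts"
    show "tval C e t \<in> D"
    proof (cases t)
      case (Cst c)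
      then have "c \<in> consts_fm (Atom p ts)" using tin by force
      then show ?thesis using Atom.prems(2) Cst by auto
    qed (use Atom tin in auto)
  qed
  then show ?case using Atom by auto
next
  case (Imp G H)
  have "eval C (case_sum P (\<lambda>p ds. P p ds \<and> set ds \<subseteq> D)) e (star H)"
    if gs: "eval C (case_sum P (\<lambda>p ds. P p ds \<and> set ds \<subseteq> D)) e (star G)"
  proof -
    have "eval C P e G" using star_mono[OF _ gs] by blast
    then have eH: "eval C P e H" using Imp by simp
    have cG: "C ` consts_fm G \<subseteq> D" using Imp.prems by auto
    have sH: "\<forall>x\<in>sp_unrestricted H. e x \<in> D"
    proof
      fix x assume xH: "x \<in> sp_unrestricted H"
      show "e x \<in> D"
      proof (cases "x \<in> rv G")
        case True
        then show ?thesis using rv_star[OF cG gs] by blast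
      next
        case False
        then show ?thesis using Imp.prems(3) xH by auto
      qed
    qed
    have "qfree H" "C ` consts_fm H \<subseteq> D" using Imp.prems by auto
    then show ?thesis using Imp.IH(2) sH eH by blast
  qed
  then show ?case using Imp by (auto simp: eval_rename_Inl)
qed auto

definition small :: "('p \<times> nat) set \<Rightarrow> 'd set \<Rightarrow> ('p \<Rightarrow> 'd list \<Rightarrow> bool) \<Rightarrow> bool" where
  "small Ps D P \<longleftrightarrow> (\<forall>(p, n)\<in>Ps. \<forall>ds. length ds = n \<longrightarrow> P p ds \<longrightarrow> set ds \<subseteq> D)"

lemma small_Un[simp]: "small (A \<union> B) D P \<longleftrightarrow> small A D P \<and> small B D P"
  unfolding small_def by blast

lemma simp_and_Top: "simp_and a b = Top \<Longrightarrow> a = Top \<and> b = Top"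
  unfolding simp_and_def by (auto split: if_splits)
lemma simp_and_Bot: "simp_and a b = Bot \<Longrightarrow> a = Bot \<or> b = Bot"
  unfolding simp_and_def by (auto split: if_splits)
lemma simp_or_Top: "simp_or a b = Top \<Longrightarrow> a = Top \<or> b = Top"
  unfolding simp_or_def by (auto split: if_splits)
lemma simp_or_Bot: "simp_or a b = Bot \<Longrightarrow> a = Bot \<and> b = Bot"
  unfolding simp_or_def by (auto split: if_splits)
lemma simp_imp_Top: "simp_imp a b = Top \<Longrightarrow> a = Bot \<or> b = Top"
  unfolding simp_imp_def by (auto split: if_splits)
lemma simp_imp_Bot: "simp_imp a b = Bot \<Longrightarrow> a = Top \<and> b = Bot"
  unfolding simp_imp_def by (auto split: if_splits)

lemma restr: "qfree S \<Longrightarrow> small (preds S) D P \<Longrightarrow> small (preds S) D U \<Longrightarrow> C ` consts_fm S \<subseteq> D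
  \<Longrightarrow> e x \<notin> D \<Longrightarrow>
  (simplify (repl_bot x S) = Top \<longrightarrow> eval C P e S \<and> eval C (case_sum P U) e (star S)) \<and>
  (simplify (repl_bot x S) = Bot \<longrightarrow> \<not> eval C P e S \<and> \<not> eval C (case_sum P U) e (star S))"
proof (induction S)
  case (Atom p ts)
  show ?case
  proof (cases "x \<in> rv (Atom p ts)")
    case True
    then obtain t where "t \<in> set ts" and xt: "x \<in> tvars t" by auto
    have "t = Var x" by (cases t) (use xt in auto)
    with \<open>t \<in> set ts\<close> have ex: "e x \<in> set (map (tval C e) ts)" by force
    have sP: "small {(p, length ts)} D P" and sU: "small {(p, length ts)} D U" using Atom.prems by auto
    have "\<not> P p (map (tval C e) ts)"
    proof
      assume "P p (map (tval C e) ts)"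
      moreover have "\<forall>ds. length ds = length ts \<longrightarrow> P p ds \<longrightarrow> set ds \<subseteq> D" using sP by (simp add: small_def)
      ultimately have "set (map (tval C e) ts) \<subseteq> D" by (metis length_map)
      then show False using ex Atom.prems(5) by blast
    qed
    moreover have "\<not> U p (map (tval C e) ts)"
    proof
      assume "U p (map (tval C e) ts)"
      moreover have "\<forall>ds. length ds = length ts \<longrightarrow> U p ds \<longrightarrow> set ds \<subseteq> D" using sU by (simp add: small_def)
      ultimately have "set (map (tval C e) ts) \<subseteq> D" by (metis length_map)
      then show False using ex Atom.prems(5) by blast
    qed
    ultimately show ?thesis using True by simp
  qed simp
next
  case (Eq t1 t2)
  then show ?case by (cases t1; cases t2) auto
next
  case (And G H)
  then show ?case by (auto dest!: simp_and_Top simp_and_Bot)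
next
  case (Or G H)
  then show ?case by (auto dest!: simp_or_Top simp_or_Bot)
next
  case (Imp G H)
  then show ?case by (auto simp: eval_rename_Inl dest!: simp_imp_Top simp_imp_Bot)
qed auto

lemma eval_cong: "\<forall>y\<in>fv G. e1 y = e2 y \<Longrightarrow> eval C P e1 G = eval C P e2 G"
proof (induction G arbitrary: e1 e2)
  case (Atom p ts)
  have "map (tval C e1) ts = map (tval C e2) ts"
  proof (rule map_cong[OF refl])
    fix t assume tin: "t \<in> set ts"
    show "tval C e1 t = tval C e2 t" by (cases t) (use Atom tin in auto)
  qed
  then show ?case by (simp only: eval.simps)
next
  case (Eq t1 t2)
  then show ?case by (cases t1; cases t2) auto
next
  case (And G H)
  have "eval C P e1 G = eval C P e2 G" "eval C P e1 H = eval C P e2 H" using And.prems by (auto intro!: And.IH)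
  then show ?case by simp
next
  case (Or G H)
  have "eval C P e1 G = eval C P e2 G" "eval C P e1 H = eval C P e2 H" using Or.prems by (auto intro!: Or.IH)
  then show ?case by simp
next
  case (Imp G H)
  have "eval C P e1 G = eval C P e2 G" "eval C P e1 H = eval C P e2 H" using Imp.prems by (auto intro!: Imp.IH)
  then show ?case by simp
next
  case (All x G)
  have "\<And>d. eval C P (e1(x:=d)) G = eval C P (e2(x:=d)) G" using All.prems by (intro All.IH) auto
  then show ?case by simp
next
  case (Ex x G)
  have "\<And>d. eval C P (e1(x:=d)) G = eval C P (e2(x:=d)) G" using Ex.prems by (intro Ex.IH) auto
  then show ?case by simp
qed auto

lemma fv_rename: "fv (rename_preds f G) = fv G"
  by (induction G) auto

lemma fv_star: "fv (star G) = fv G"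
  by (induction G) (auto simp: fv_rename)

lemma aoc_Bot: "all_occ_covered q x pol Bot"
  by (subst all_occ_covered.simps) simp
lemma aoc_Atom: "all_occ_covered q x pol (Atom p ts) = (good_sub q x pol (Atom p ts) \<or> x \<notin> (\<Union>t\<in>set ts. tvars t))"
  by (subst all_occ_covered.simps) simp
lemma aoc_Eq: "all_occ_covered q x pol (Eq t1 t2 :: ('p, 'v, 'c) fm) = (good_sub q x pol (Eq t1 t2 :: ('p, 'v, 'c) fm) \<or> x \<notin> tvars t1 \<union> tvars t2)"
  by (subst all_occ_covered.simps) simp
lemma aoc_And: "all_occ_covered q x pol (And G H) = (good_sub q x pol (And G H) \<or> (all_occ_covered q x pol G \<and> all_occ_covered q x pol H))"
  by (subst all_occ_covered.simps) simp
lemma aoc_Or: "all_occ_covered q x pol (Or G H) = (good_sub q x pol (Or G H) \<or> (all_occ_covered q x pol G \<and> all_occ_covered q x pol H))"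
  by (subst all_occ_covered.simps) simp
lemma aoc_Imp: "all_occ_covered q x pol (Imp G H) = (good_sub q x pol (Imp G H) \<or> (all_occ_covered q x (\<not> pol) G \<and> all_occ_covered q x pol H))"
  by (subst all_occ_covered.simps) simp




abbreviation tr_prop where
  "tr_prop q pol C P U e1 e2 S \<equiv> (if (q = QAll) = pol then (eval C P e1 S \<longrightarrow> eval C P e2 S) \<and> (eval C (case_sum P U) e1 (star S) \<longrightarrow> eval C (case_sum P U) e2 (star S))
     else (eval C P e2 S \<longrightarrow> eval C P e1 S) \<and> (eval C (case_sum P U) e2 (star S) \<longrightarrow> eval C (case_sum P U) e1 (star S)))"

lemma good_tr: "qfree S \<Longrightarrow> good_sub q x pol S \<Longrightarrow> small (preds S) D P \<Longrightarrow> small (preds S) D U \<Longrightarrow> C ` consts_fm S \<subseteq> D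
  \<Longrightarrow> e2 x \<notin> D \<Longrightarrow> tr_prop q pol C P U e1 e2 S"
  using restr[of S D P U C e2 x] unfolding good_sub_def pos_weakly_restricted_def neg_weakly_restricted_def
  by (auto split: if_splits)

lemma transfer_lem:
  fixes S :: "('p, 'v, 'c) fm"
  shows "qfree S \<Longrightarrow> all_occ_covered q x pol S \<Longrightarrow> small (preds S) D P \<Longrightarrow> small (preds S) D U
  \<Longrightarrow> C ` consts_fm S \<subseteq> D \<Longrightarrow> \<forall>y. y \<noteq> x \<longrightarrow> e1 y = e2 y \<Longrightarrow> e2 x \<notin> D \<Longrightarrow> tr_prop q pol C P U e1 e2 S"
proof (induction S arbitrary: pol)
  case Bot
  then show ?case by auto
next
  case (Atom p ts)
  show ?case
  proof (cases "good_sub q x pol (Atom p ts)")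
    case True
    show ?thesis using Atom.prems(1) True Atom.prems(3) Atom.prems(4) Atom.prems(5) Atom.prems(7) by (rule good_tr[where ?e1.0 = e1])
  next
    case False
    then have "x \<notin> fv (Atom p ts)" using Atom.prems(2) by (simp add: aoc_Atom)
    then have f1: "\<forall>y\<in>fv (Atom p ts). e1 y = e2 y" and f2: "\<forall>y\<in>fv (star (Atom p ts)). e1 y = e2 y"
      using Atom.prems(6) by (auto simp: fv_star)
    have q1: "eval C P e1 (Atom p ts) = eval C P e2 (Atom p ts)" by (rule eval_cong[OF f1])
    have q2: "eval C (case_sum P U) e1 (star (Atom p ts)) = eval C (case_sum P U) e2 (star (Atom p ts))" by (rule eval_cong[OF f2])
    show ?thesis unfolding q1 q2 by simp
  qed
next
  case (Eq t1 t2)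
  show ?case
  proof (cases "good_sub q x pol (Eq t1 t2 :: ('p, 'v, 'c) fm)")
    case True
    show ?thesis using Eq.prems(1) True Eq.prems(3) Eq.prems(4) Eq.prems(5) Eq.prems(7) by (rule good_tr[where ?e1.0 = e1])
  next
    case False
    then have "x \<notin> fv (Eq t1 t2)" using Eq.prems(2) by (simp add: aoc_Eq)
    then have f1: "\<forall>y\<in>fv (Eq t1 t2). e1 y = e2 y" and f2: "\<forall>y\<in>fv (star (Eq t1 t2)). e1 y = e2 y"
      using Eq.prems(6) by (auto simp: fv_star)
    have q1: "eval C P e1 (Eq t1 t2) = eval C P e2 (Eq t1 t2)" by (rule eval_cong[OF f1])
    have q2: "eval C (case_sum P U) e1 (star (Eq t1 t2)) = eval C (case_sum P U) e2 (star (Eq t1 t2))" by (rule eval_cong[OF f2])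
    show ?thesis unfolding q1 q2 by simp
  qed
next
  case (And G H)
  show ?case
  proof (cases "good_sub q x pol (And G H)")
    case True
    show ?thesis using And.prems(1) True And.prems(3) And.prems(4) And.prems(5) And.prems(7) by (rule good_tr[where ?e1.0 = e1])
  next
    case False
    then have "all_occ_covered q x pol G" "all_occ_covered q x pol H" using And.prems(2) by (auto simp: aoc_And)
    moreover have "qfree G" "small (preds G) D P" "small (preds G) D U" "C ` consts_fm G \<subseteq> D"
      "qfree H" "small (preds H) D P" "small (preds H) D U" "C ` consts_fm H \<subseteq> D"
      using And.prems by auto
    ultimately have tG: "tr_prop q pol C P U e1 e2 G" and tH: "tr_prop q pol C P U e1 e2 H"
      using And.IH(1)[of pol] And.IH(2)[of pol] And.prems(6) And.prems(7) by blast+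
    show ?thesis
    proof (cases "(q = QAll) = pol")
      case True
      then show ?thesis using tG tH by simp
    next
      case False
      then show ?thesis using tG tH by simp
    qed
  qed
next
  case (Or G H)
  show ?case
  proof (cases "good_sub q x pol (Or G H)")
    case True
    show ?thesis using Or.prems(1) True Or.prems(3) Or.prems(4) Or.prems(5) Or.prems(7) by (rule good_tr[where ?e1.0 = e1])
  next
    case False
    then have "all_occ_covered q x pol G" "all_occ_covered q x pol H" using Or.prems(2) by (auto simp: aoc_Or)
    moreover have "qfree G" "small (preds G) D P" "small (preds G) D U" "C ` consts_fm G \<subseteq> D"
      "qfree H" "small (preds H) D P" "small (preds H) D U" "C ` consts_fm H \<subseteq> D"
      using Or.prems by auto
    ultimately have tG: "tr_prop q pol C P U e1 e2 G" and tH: "tr_prop q pol C P U e1 e2 H"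
      using Or.IH(1)[of pol] Or.IH(2)[of pol] Or.prems(6) Or.prems(7) by blast+
    show ?thesis
    proof (cases "(q = QAll) = pol")
      case True
      then show ?thesis using tG tH by simp
    next
      case False
      then show ?thesis using tG tH by simp
    qed
  qed
next
  case (Imp G H)
  show ?case
  proof (cases "good_sub q x pol (Imp G H)")
    case True
    show ?thesis using Imp.prems(1) True Imp.prems(3) Imp.prems(4) Imp.prems(5) Imp.prems(7) by (rule good_tr[where ?e1.0 = e1])
  next
    case False
    then have "all_occ_covered q x (\<not> pol) G" "all_occ_covered q x pol H" using Imp.prems(2) by (auto simp: aoc_Imp)
    moreover have "qfree G" "small (preds G) D P" "small (preds G) D U" "C ` consts_fm G \<subseteq> D"
      "qfree H" "small (preds H) D P" "small (preds H) D U" "C ` consts_fm H \<subseteq> D"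
      using Imp.prems by auto
    ultimately have tG: "tr_prop q (\<not> pol) C P U e1 e2 G" and tH: "tr_prop q pol C P U e1 e2 H"
      using Imp.IH(1)[of "\<not> pol"] Imp.IH(2)[of pol] Imp.prems(6) Imp.prems(7) by blast+
    show ?thesis
    proof (cases "(q = QAll) = pol")
      case True
      then have "(q = QAll) \<noteq> (\<not> pol)" by simp
      then show ?thesis using True tG tH by (simp add: eval_rename_Inl)
    next
      case False
      then have "(q = QAll) = (\<not> pol)" by simp
      then show ?thesis using False tG tH by (simp add: eval_rename_Inl)
    qed
  qed
qed auto



definition Trans :: "'d set \<Rightarrow> quant \<Rightarrow> 'v \<Rightarrow> (('v \<Rightarrow> 'd) \<Rightarrow> bool) \<Rightarrow> bool" where
  "Trans D q x \<Phi> \<longleftrightarrow> (\<forall>e1 e2. (\<forall>y. y \<noteq> x \<longrightarrow> e1 y = e2 y) \<longrightarrow> e2 x \<notin> D \<longrightarrow>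
      (if q = QAll then \<Phi> e1 \<longrightarrow> \<Phi> e2 else \<Phi> e2 \<longrightarrow> \<Phi> e1))"

lemma qeval_Trans: "x \<notin> snd ` set qs \<Longrightarrow> Trans D q x \<Phi> \<Longrightarrow> Trans D q x (qeval D qs \<Phi>)"
proof (induction qs)
  case Nil
  then show ?case by (simp add: Trans_def)
next
  case (Cons a qs)
  obtain q' y where a: "a = (q', y)" by (cases a)
  have yx: "y \<noteq> x" using Cons.prems a by auto
  have T: "Trans D q x (qeval D qs \<Phi>)" using Cons by auto
  show ?case unfolding Trans_def
  proof (intro allI impI)
    fix e1 e2 :: "'a \<Rightarrow> 'b"
    assume agree: "\<forall>z. z \<noteq> x \<longrightarrow> e1 z = e2 z" and nx: "e2 x \<notin> D"
    have step: "if q = QAll then qeval D qs \<Phi> (e1(y := d)) \<longrightarrow> qeval D qs \<Phi> (e2(y := d))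
        else qeval D qs \<Phi> (e2(y := d)) \<longrightarrow> qeval D qs \<Phi> (e1(y := d))" for d
    proof -
      have "\<forall>z. z \<noteq> x \<longrightarrow> (e1(y := d)) z = (e2(y := d)) z" using agree by auto
      moreover have "(e2(y := d)) x \<notin> D" using nx yx by auto
      ultimately show ?thesis using T unfolding Trans_def by blast
    qed
    show "if q = QAll then qeval D (a # qs) \<Phi> e1 \<longrightarrow> qeval D (a # qs) \<Phi> e2
        else qeval D (a # qs) \<Phi> e2 \<longrightarrow> qeval D (a # qs) \<Phi> e1"
    proof (cases q)
      case QAll
      then show ?thesis using step by (cases q') (auto simp: a)
    next
      case QEx
      then show ?thesis using step by (cases q') (auto simp: a)
    qed
  qed
qed

lemma qeval_UNIV: "distinct (map snd qs) \<Longrightarrow> D \<noteq> {} \<Longrightarrow> \<forall>(q, x)\<in>set qs. Trans D q x \<Phi>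
  \<Longrightarrow> qeval UNIV qs \<Phi> e = qeval D qs \<Phi> e"
proof (induction qs arbitrary: e)
  case Nil
  then show ?case by simp
next
  case (Cons a qs)
  obtain q x where a: "a = (q, x)" by (cases a)
  have IH: "\<And>e. qeval UNIV qs \<Phi> e = qeval D qs \<Phi> e" using Cons by auto
  have xn: "x \<notin> snd ` set qs" using Cons.prems(1) a by auto
  have T: "Trans D q x (qeval D qs \<Phi>)" using qeval_Trans[OF xn] Cons.prems(3) a by auto
  obtain d0 where d0: "d0 \<in> D" using Cons.prems(2) by auto
  have ag: "\<forall>y. y \<noteq> x \<longrightarrow> (e(x := d0)) y = (e(x := d)) y" for d by auto
  show ?case
  proof (cases q)
    case QAll
    have "qeval D qs \<Phi> (e(x := d))" if h: "\<forall>d\<in>D. qeval D qs \<Phi> (e(x := d))" for d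
    proof (cases "d \<in> D")
      case True
      with h show ?thesis by auto
    next
      case False
      have "qeval D qs \<Phi> (e(x := d0))" using h d0 by auto
      moreover have H: "qeval D qs \<Phi> e1 \<longrightarrow> qeval D qs \<Phi> e2" if "\<forall>y. y \<noteq> x \<longrightarrow> e1 y = e2 y" "e2 x \<notin> D" for e1 e2
        using T QAll that unfolding Trans_def by (metis quant.distinct(1))
      moreover have "qeval D qs \<Phi> (e(x := d0)) \<longrightarrow> qeval D qs \<Phi> (e(x := d))"
        by (rule H[OF ag]) (simp add: False)
      ultimately show ?thesis by blast
    qed
    then show ?thesis using QAll a IH by auto
  next
    case QEx
    have "\<exists>d\<in>D. qeval D qs \<Phi> (e(x := d))" if h: "qeval D qs \<Phi> (e(x := d))" for d
    proof (cases "d \<in> D")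
      case True
      with h show ?thesis by auto
    next
      case False
      have H: "qeval D qs \<Phi> e2 \<longrightarrow> qeval D qs \<Phi> e1" if "\<forall>y. y \<noteq> x \<longrightarrow> e1 y = e2 y" "e2 x \<notin> D" for e1 e2
        using T QEx that unfolding Trans_def by (metis quant.distinct(1))
      have "qeval D qs \<Phi> (e(x := d)) \<longrightarrow> qeval D qs \<Phi> (e(x := d0))"
        by (rule H[OF ag]) (simp add: False)
      then have "qeval D qs \<Phi> (e(x := d0))" using h by blast
      then show ?thesis using d0 by auto
    qed
    then show ?thesis using QEx a IH by auto
  qed
qed

lemma qeval_mono: "(\<And>e. \<Phi> e \<Longrightarrow> \<Psi> e) \<Longrightarrow> qeval D qs \<Phi> e \<Longrightarrow> qeval D qs \<Psi> e"
  by (induction D qs \<Phi> e rule: qeval.induct) auto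

lemma small_of_SM:
  assumes sm: "SM C P H" and st: "sat C (case_sum P (\<lambda>p ds. P p ds \<and> set ds \<subseteq> D)) (star H)"
  shows "small (preds H) D P"
proof -
  let ?U = "\<lambda>p ds. P p ds \<and> set ds \<subseteq> D"
  have le: "le_on (preds H) ?U P" by (auto simp: le_on_def)
  have "\<not> lt_on (preds H) ?U P" using sm st unfolding SM_def by blast
  then have "eq_on (preds H) ?U P" using le unfolding lt_on_def by blast
  then show ?thesis unfolding eq_on_def small_def by fastforce
qed

lemma le_small: "le_on Ps U P \<Longrightarrow> small Ps D P \<Longrightarrow> small Ps D U"
  unfolding le_on_def small_def by fastforce



theorem proposition3:
  fixes F :: "('p, 'v, 'c) fm" and cs :: "'c list"
    and C :: "'c \<Rightarrow> 'd" and P :: "'p \<Rightarrow> 'd list \<Rightarrow> bool"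
  assumes "safe F"
    and "cs \<noteq> []" and "distinct cs"
    and "consts_fm F \<subseteq> set cs"
  shows "SM C P (ground cs F) \<longleftrightarrow> SM C P F"
proof -
  define qs where "qs = prefix F"
  define M where "M = matrix F"
  define D where "D = C ` set cs"
  from assms(1) have ss: "semi_safe F" and cov: "\<forall>(q, x)\<in>set qs. all_occ_covered q x True M"
    by (auto simp: safe_def qs_def M_def)
  from ss have sent: "fv F = {}" and qM: "qfree M" and dist: "distinct (map snd qs)"
    and nsp: "\<forall>x\<in>set (map snd qs). x \<notin> sp_unrestricted M"
    by (auto simp: semi_safe_def prenex_sentence_def sentence_def qs_def M_def)
  have spM: "sp_unrestricted M = {}"
    using sp_fv[OF qM] fv_matrix[of F] sent nsp unfolding M_def qs_def by blast
  have cM: "C ` consts_fm M \<subseteq> D" using assms(4) by (auto simp: M_def D_def consts_matrix)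
  have pM: "preds M = preds F" by (simp add: M_def preds_matrix)
  have pG: "preds (ground cs F) = preds F" using assms(2) by (rule preds_ground)
  have Dne: "D \<noteq> {}" using assms(2) by (simp add: D_def)
  have E1: "eval C I e F = qeval UNIV qs (\<lambda>e. eval C I e M) e" for I e
    unfolding qs_def M_def by (rule L1)
  have E2: "eval C I e (star F) = qeval UNIV qs (\<lambda>e. eval C I e (star M)) e" for I e
  proof -
    have "eval C I e (star F) = qeval UNIV (prefix (star F)) (\<lambda>e. eval C I e (matrix (star F))) e"
      by (rule L1)
    then show ?thesis by (simp only: prefix_star matrix_star qs_def M_def)
  qed
  have E3: "eval C I e (ground cs F) = qeval D qs (\<lambda>e. eval C I e M) e" for I e
    unfolding qs_def M_def D_def by (rule L3[OF assms(2)])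
  have E4: "eval C I e (star (ground cs F)) = qeval D qs (\<lambda>e. eval C I e (star M)) e" for I e
  proof -
    have "eval C I e (ground cs (star F)) = qeval D (prefix (star F)) (\<lambda>e. eval C I e (matrix (star F))) e"
      unfolding D_def by (rule L3[OF assms(2)])
    then show ?thesis by (simp only: star_ground[OF assms(2)] prefix_star matrix_star qs_def M_def)
  qed
  have TrP: "\<forall>(q, x)\<in>set qs. Trans D q x (\<lambda>e. eval C P e M)" if sP: "small (preds F) D P"
  proof (intro ballI, clarify)
    fix q x assume qx: "(q, x) \<in> set qs"
    have a: "all_occ_covered q x True M" using cov qx by auto
    have sPM: "small (preds M) D P" using sP pM by simp
    show "Trans D q x (\<lambda>e. eval C P e M)"
      unfolding Trans_def
    proof (intro allI impI)
      fix e1 e2 :: "'v \<Rightarrow> 'd"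
      assume h1: "\<forall>y. y \<noteq> x \<longrightarrow> e1 y = e2 y" and h2: "e2 x \<notin> D"
      have "tr_prop q True C P P e1 e2 M"
        by (rule transfer_lem[OF qM a sPM sPM cM h1 h2])
      then show "if q = QAll then eval C P e1 M \<longrightarrow> eval C P e2 M else eval C P e2 M \<longrightarrow> eval C P e1 M"
        by (cases q) simp_all
    qed
  qed
  have TrU: "\<forall>(q, x)\<in>set qs. Trans D q x (\<lambda>e. eval C (case_sum P U) e (star M))"
    if sP: "small (preds F) D P" and sU: "small (preds F) D U" for U
  proof (intro ballI, clarify)
    fix q x assume qx: "(q, x) \<in> set qs"
    have a: "all_occ_covered q x True M" using cov qx by auto
    have sPM: "small (preds M) D P" using sP pM by simp
    have sUM: "small (preds M) D U" using sU pM by simp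
    show "Trans D q x (\<lambda>e. eval C (case_sum P U) e (star M))"
      unfolding Trans_def
    proof (intro allI impI)
      fix e1 e2 :: "'v \<Rightarrow> 'd"
      assume h1: "\<forall>y. y \<noteq> x \<longrightarrow> e1 y = e2 y" and h2: "e2 x \<notin> D"
      have "tr_prop q True C P U e1 e2 M"
        by (rule transfer_lem[OF qM a sPM sUM cM h1 h2])
      then show "if q = QAll then eval C (case_sum P U) e1 (star M) \<longrightarrow> eval C (case_sum P U) e2 (star M)
         else eval C (case_sum P U) e2 (star M) \<longrightarrow> eval C (case_sum P U) e1 (star M)"
        by (cases q) simp_all
    qed
  qed
  have key1: "sat C P F \<longleftrightarrow> sat C P (ground cs F)" if sP: "small (preds F) D P"
    unfolding sat_def E1 E3 using qeval_UNIV[OF dist Dne TrP[OF sP]] by simp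
  have key2: "sat C (case_sum P U) (star F) \<longleftrightarrow> sat C (case_sum P U) (star (ground cs F))"
    if sP: "small (preds F) D P" and sU: "small (preds F) D U" for U
    unfolding sat_def E2 E4 using qeval_UNIV[OF dist Dne TrU[OF sP sU]] by simp
  let ?U0 = "\<lambda>p ds. P p ds \<and> set ds \<subseteq> D"
  have semiM: "eval C P e M \<Longrightarrow> eval C (case_sum P ?U0) e (star M)" for e
    by (rule semi[OF qM cM]) (simp_all add: spM)
  have monoA: "qeval D' qs (\<lambda>e. eval C P e M) e \<Longrightarrow> qeval D' qs (\<lambda>e. eval C (case_sum P ?U0) e (star M)) e" for D' e
    by (erule qeval_mono[rotated]) (rule semiM)
  have smallF: "small (preds F) D P" if sm: "SM C P F"
  proof (rule small_of_SM[OF sm])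
    have "sat C P F" using sm by (simp add: SM_def)
    then show "sat C (case_sum P ?U0) (star F)"
      unfolding sat_def E1 E2 using monoA by blast
  qed
  have smallG: "small (preds F) D P" if sm: "SM C P (ground cs F)"
  proof -
    have "small (preds (ground cs F)) D P"
    proof (rule small_of_SM[OF sm])
      have "sat C P (ground cs F)" using sm by (simp add: SM_def)
      then show "sat C (case_sum P ?U0) (star (ground cs F))"
        unfolding sat_def E3 E4 using monoA by blast
    qed
    then show ?thesis using pG by simp
  qed
  have equiv: "SM C P (ground cs F) \<longleftrightarrow> SM C P F" if sP: "small (preds F) D P"
  proof -
    have ex_eq: "(\<exists>U. lt_on (preds F) U P \<and> sat C (case_sum P U) (star (ground cs F)))
      \<longleftrightarrow> (\<exists>U. lt_on (preds F) U P \<and> sat C (case_sum P U) (star F))"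
    proof
      assume "\<exists>U. lt_on (preds F) U P \<and> sat C (case_sum P U) (star (ground cs F))"
      then obtain U where u1: "lt_on (preds F) U P" and u2: "sat C (case_sum P U) (star (ground cs F))" by blast
      have sU: "small (preds F) D U" using u1 le_small[OF _ sP] unfolding lt_on_def by blast
      show "\<exists>U. lt_on (preds F) U P \<and> sat C (case_sum P U) (star F)"
        using u1 u2 key2[OF sP sU] by blast
    next
      assume "\<exists>U. lt_on (preds F) U P \<and> sat C (case_sum P U) (star F)"
      then obtain U where u1: "lt_on (preds F) U P" and u2: "sat C (case_sum P U) (star F)" by blast
      have sU: "small (preds F) D U" using u1 le_small[OF _ sP] unfolding lt_on_def by blast
      show "\<exists>U. lt_on (preds F) U P \<and> sat C (case_sum P U) (star (ground cs F))"
        using u1 u2 key2[OF sP sU] by blast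
    qed
    show ?thesis unfolding SM_def pG ex_eq key1[OF sP] ..
  qed
  show ?thesis using equiv smallF smallG by blast
qed

end
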